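(* Let $P$ be a domain and $D\ge 2$ an integer. Let $q_1,\dots,q_\ell$ ($\ell\ge1$) be distinct pixels of $P$ forming a path $q_1q_2\cdots q_\ell$ in $G_P$ whose pixel centers lie either on one straight segment or on two perpendicular segments meeting at one bend, such that $q_1$ is a boundary pixel and $\mathrm{vdist}(q_i)=i$ for $i=1,\dots,\ell$. Let $1\le J\le \ell$, and suppose $q_1,\dots,q_J$ carry no snow, each of $q_{J+1},\dots,q_\ell$ carries exactly one unit of snow, and the snowblower stands on $q_1$. Write $\ell-J=kD+r$ with integers $k\ge0$, $0\le r<D$, and let $\Delta=\frac1D\sum_{i=J+1}^{\ell} i$. Then in the default model there is a sequence of moves obeying the capacity constraint, in which the snowblower only visits pixels among $q_1,\dots,q_\ell$ and snow is only thrown onto pixels among $q_1,\dots,q_\ell$ or out of $P$, which ends with the snowblower on $q_1$ and none of $q_1,\dots,q_\ell$ carrying snow, and whose number of moves is at most $2(\ell-1)+4\Delta$ if $D\ge4$ and at most $2(\ell-1)+2\Delta$ if $D\in\{2,3\}$. Moreover, if $r=0$, the number of moves is at most $4\Delta$ if $D\ge 4$ and at most $2\Delta$ if $D\in\{2,3\}$.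
   Context: A pixel is a closed unit square $[i,i+1]\times[j,j+1]$, $i,j\in\mathbb{Z}$; two pixels are adjacent if they share a side. The domain $P$ is a finite set of pixels whose dual graph $G_P$ (vertex per pixel, edges between adjacent pixels) is connected. A boundary side is a side of a pixel of $P$ not shared with another pixel of $P$; a boundary pixel is a pixel of $P$ with a boundary side. For $q\in P$, $\mathrm{vdist}(q)=1+\min_{b}\mathrm{dist}_{G_P}(q,b)$, the minimum over boundary pixels $b$ of $P$. A move (default model): the snowblower goes from its pixel $v$ to an adjacent pixel $u\in P$, and upon entering $u$ all snow on $u$ is thrown onto any chosen one of the four pixels adjacent to $u$ (including $v$); if that pixel is not in $P$ the snow disappears, otherwise it is added to the snow there. Capacity constraint: at all times every pixel of $P$ carries at most $D$ units of snow. *)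

theory Defs
  imports Complex_Main
begin

text \<open>A pixel [i,i+1] x [j,j+1] is represented by its lower-left corner (i,j).\<close>
type_synonym pixel = "int \<times> int"

definition adj :: "pixel \<Rightarrow> pixel \<Rightarrow> bool" where
  "adj p p' \<longleftrightarrow> \<bar>fst p - fst p'\<bar> + \<bar>snd p - snd p'\<bar> = 1"

definition adjP :: "pixel set \<Rightarrow> pixel \<Rightarrow> pixel \<Rightarrow> bool" where
  "adjP P p p' \<longleftrightarrow> p \<in> P \<and> p' \<in> P \<and> adj p p'"

definition domain :: "pixel set \<Rightarrow> bool" where
  "domain P \<longleftrightarrow> finite P \<and> P \<noteq> {} \<and> (\<forall>p\<in>P. \<forall>p'\<in>P. (adjP P)\<^sup>*\<^sup>* p p')"

text \<open>A boundary pixel has a side not shared with another pixel of P, i.e. the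
  pixel across that side is not in P.\<close>
definition boundary_pixel :: "pixel set \<Rightarrow> pixel \<Rightarrow> bool" where
  "boundary_pixel P p \<longleftrightarrow> p \<in> P \<and> (\<exists>p'. adj p p' \<and> p' \<notin> P)"

definition dist_GP :: "pixel set \<Rightarrow> pixel \<Rightarrow> pixel \<Rightarrow> nat" where
  "dist_GP P p p' = (LEAST n. (adjP P ^^ n) p p')"

definition vdist :: "pixel set \<Rightarrow> pixel \<Rightarrow> nat" where
  "vdist P p = 1 + (LEAST n. \<exists>b. boundary_pixel P b \<and> dist_GP P p b = n)"

text \<open>Snow configuration: amount of snow on each pixel (only pixels of P matter).
  A move: (u, t) = snowblower enters u, all snow of u is thrown onto t.\<close>
type_synonym snow = "pixel \<Rightarrow> nat"

definition move_snow :: "pixel set \<Rightarrow> snow \<Rightarrow> pixel \<Rightarrow> pixel \<Rightarrow> snow" where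
  "move_snow P s u t =
     (let s' = s(u := 0) in if t \<in> P then s'(t := s' t + s u) else s')"

fun exec :: "pixel set \<Rightarrow> nat \<Rightarrow> pixel \<times> snow \<Rightarrow> (pixel \<times> pixel) list
              \<Rightarrow> (pixel \<times> snow) option" where
  "exec P D (v, s) [] = Some (v, s)"
| "exec P D (v, s) ((u, t) # ms) =
     (if u \<in> P \<and> adj v u \<and> adj u t \<and> (\<forall>p\<in>P. move_snow P s u t p \<le> D)
      then exec P D (u, move_snow P s u t) ms else None)"

definition step :: "(nat \<Rightarrow> pixel) \<Rightarrow> nat \<Rightarrow> int \<times> int" where
  "step q i = (fst (q (Suc i)) - fst (q i), snd (q (Suc i)) - snd (q i))"

end

theory Submission
  imports Defs
begin

lemma adj_sym: "adj a b = adj b a"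
  unfolding adj_def by (simp add: abs_minus_commute)

lemma exec_append:
  "exec P D x (a @ b) = (case exec P D x a of None \<Rightarrow> None | Some y \<Rightarrow> exec P D y b)"
  by (induction P D x a rule: exec.induct) auto

lemma gauss_blk: "2 * (\<Sum>i\<in>{J<..J+n}. real i) = real n * (2 * real J + real n + 1)"
proof (induction n)
  case 0
  then show ?case by simp
next
  case (Suc n)
  have "{J<..J + Suc n} = insert (Suc (J+n)) {J<..J+n}" by auto
  then have "(\<Sum>i\<in>{J<..J+Suc n}. real i) = real (Suc (J+n)) + (\<Sum>i\<in>{J<..J+n}. real i)"
    by simp
  then show ?case using Suc by (simp add: algebra_simps)
qed

locale pctx =
  fixes P :: "pixel set" and D :: nat and q :: "nat \<Rightarrow> pixel" and l :: nat
    and s0 :: snow and ob :: pixel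
  assumes inP: "\<forall>i\<in>{1..l}. q i \<in> P"
    and dist: "inj_on q {1..l}"
    and path: "\<forall>i\<in>{1..<l}. adj (q i) (q (Suc i))"
    and obP: "ob \<notin> P"
    and adjo: "adj (q 1) ob"
    and cap0: "\<forall>p\<in>P. s0 p \<le> D"
    and l1: "l \<ge> 1"
begin

definition st :: "(nat \<Rightarrow> nat) \<Rightarrow> snow" where
  "st g = (\<lambda>p. if p \<in> q ` {1..l} then g (inv_into {1..l} q p) else s0 p)"

lemma inv_q: "k \<in> {1..l} \<Longrightarrow> inv_into {1..l} q (q k) = k"
  by (rule inv_into_f_f[OF dist])

lemma st_q: "k \<in> {1..l} \<Longrightarrow> st g (q k) = g k"
  unfolding st_def using inv_q[of k] by auto

lemma st_cong: "(\<forall>k\<in>{1..l}. g k = g' k) \<Longrightarrow> st g = st g'"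
proof
  fix p assume h: "\<forall>k\<in>{1..l}. g k = g' k"
  show "st g p = st g' p"
  proof (cases "p \<in> q ` {1..l}")
    case True
    then obtain k where "k \<in> {1..l}" "p = q k" by blast
    then show ?thesis using h by (simp only: st_q)
  next
    case False
    then show ?thesis by (simp add: st_def)
  qed
qed

lemma st_s0: "st (\<lambda>k. s0 (q k)) = s0"
proof
  fix p show "st (\<lambda>k. s0 (q k)) p = s0 p"
  proof (cases "p \<in> q ` {1..l}")
    case True
    then obtain k where "k \<in> {1..l}" "p = q k" by auto
    then show ?thesis by (simp add: st_q)
  next
    case False
    then show ?thesis by (simp add: st_def)
  qed
qed

lemma qeq: "k \<in> {1..l} \<Longrightarrow> i \<in> {1..l} \<Longrightarrow> (q k = q i) = (k = i)"
  using dist by (auto dest: inj_onD)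

lemma move_q:
  assumes "i \<in> {1..l}" "i' \<in> {1..l}" "i \<noteq> i'"
  shows "move_snow P (st g) (q i) (q i') = st (g(i := 0, i' := g i' + g i))"
proof
  fix p
  have qi': "q i' \<in> P" using inP assms by auto
  show "move_snow P (st g) (q i) (q i') p = st (g(i := 0, i' := g i' + g i)) p"
  proof (cases "p \<in> q ` {1..l}")
    case True
    then obtain k where k: "k \<in> {1..l}" "p = q k" by auto
    then show ?thesis using assms qi'
      by (auto simp: move_snow_def Let_def st_q qeq)
  next
    case False
    have "p \<noteq> q i" "p \<noteq> q i'" using False assms by auto
    then show ?thesis using False qi' by (simp add: move_snow_def Let_def st_def)
  qed
qed

lemma move_out: "move_snow P (st g) (q 1) ob = st (g(1 := 0))"
proof
  fix p
  show "move_snow P (st g) (q 1) ob p = st (g(1 := 0)) p"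
  proof (cases "p \<in> q ` {1..l}")
    case True
    then obtain k where k: "k \<in> {1..l}" "p = q k" by auto
    then show ?thesis using obP l1
      by (auto simp: move_snow_def Let_def st_q qeq)
  next
    case False
    have "p \<noteq> q 1" using False l1 by auto
    then show ?thesis using False obP by (simp add: move_snow_def Let_def st_def)
  qed
qed

lemma cap: "(\<forall>k\<in>{1..l}. g k \<le> D) \<Longrightarrow> \<forall>p\<in>P. st g p \<le> D"
proof
  fix p assume h: "\<forall>k\<in>{1..l}. g k \<le> D" and p: "p \<in> P"
  show "st g p \<le> D"
  proof (cases "p \<in> q ` {1..l}")
    case True
    then obtain k where "k \<in> {1..l}" "p = q k" by blast
    then show ?thesis using h by (simp only: st_q)
  next
    case False
    then show ?thesis using cap0 p by (simp add: st_def)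
  qed
qed

definition G :: "(nat \<Rightarrow> nat) \<Rightarrow> nat \<Rightarrow> nat \<Rightarrow> nat" where
  "G g0 i k = (if k < i then g0 (Suc k) else if k = i then 0 else g0 k)"

lemma out_phase:
  assumes "\<forall>k. g0 k \<le> D" "1 \<le> i" "i \<le> j" "j \<le> l"
  shows "exec P D (q i, st (G g0 i)) (map (\<lambda>k. (q k, q (k-1))) [Suc i..<Suc j] @ rest)
         = exec P D (q j, st (G g0 j)) rest"
  using assms
proof (induction "j - i" arbitrary: i)
  case 0
  then show ?case by simp
next
  case (Suc x)
  then have ij: "i < j" by simp
  have l: "[Suc i..<Suc j] = Suc i # [Suc (Suc i)..<Suc j]" using ij by (simp add: upt_conv_Cons)
  have mv: "move_snow P (st (G g0 i)) (q (Suc i)) (q i) = st (G g0 (Suc i))"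
  proof -
    have "move_snow P (st (G g0 i)) (q (Suc i)) (q i)
          = st ((G g0 i)(Suc i := 0, i := G g0 i i + G g0 i (Suc i)))"
      using Suc.prems ij by (intro move_q) auto
    also have "(G g0 i)(Suc i := 0, i := G g0 i i + G g0 i (Suc i)) = G g0 (Suc i)"
      by (rule ext) (auto simp: G_def)
    finally show ?thesis .
  qed
  have capG: "\<forall>p\<in>P. st (G g0 (Suc i)) p \<le> D"
    by (rule cap) (use Suc.prems in \<open>auto simp: G_def\<close>)
  have a1: "adj (q i) (q (Suc i))" using path Suc.prems ij by auto
  have a2: "adj (q (Suc i)) (q i)" using a1 adj_sym by blast
  have inp: "q (Suc i) \<in> P" using inP Suc.prems ij by auto
  have "exec P D (q i, st (G g0 i)) (map (\<lambda>k. (q k, q (k-1))) [Suc i..<Suc j] @ rest)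
      = exec P D (q (Suc i), st (G g0 (Suc i))) (map (\<lambda>k. (q k, q (k-1))) [Suc (Suc i)..<Suc j] @ rest)"
    unfolding l using a1 a2 inp capG mv by simp
  also have "\<dots> = exec P D (q j, st (G g0 j)) rest"
    using Suc ij by (intro Suc.hyps) auto
  finally show ?case .
qed

definition H :: "(nat \<Rightarrow> nat) \<Rightarrow> nat \<Rightarrow> nat \<Rightarrow> nat \<Rightarrow> nat" where
  "H g0 j i k = (if k < i - 1 then g0 (Suc k) else if k = i - 1 then (\<Sum>m\<in>{i..j}. g0 m)
     else if k \<le> j then 0 else g0 k)"

lemma back_phase:
  assumes "\<forall>k. g0 k \<le> D" "(\<Sum>m\<in>{2..j}. g0 m) \<le> D" "2 \<le> i" "i \<le> j" "j \<le> l"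
  shows "exec P D (q i, st (H g0 j i)) (map (\<lambda>k. (q k, q (k-1))) (rev [2..<i]) @ rest)
         = exec P D (q 2, st (H g0 j 2)) rest"
  using assms(3,4)
proof (induction i rule: nat_induct_at_least)
  case base
  then show ?case by simp
next
  case (Suc n)
  have l: "rev [2..<Suc n] = n # rev [2..<n]" using Suc by simp
  have mv: "move_snow P (st (H g0 j (Suc n))) (q n) (q (n - 1)) = st (H g0 j n)"
  proof -
    have "move_snow P (st (H g0 j (Suc n))) (q n) (q (n-1))
          = st ((H g0 j (Suc n))(n := 0, n-1 := H g0 j (Suc n) (n-1) + H g0 j (Suc n) n))"
      using Suc assms by (intro move_q) auto
    also have "(H g0 j (Suc n))(n := 0, n-1 := H g0 j (Suc n) (n-1) + H g0 j (Suc n) n) = H g0 j n"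
      using Suc by (intro ext) (auto simp: H_def sum.atLeast_Suc_atMost)
    finally show ?thesis .
  qed
  have sle: "(\<Sum>m\<in>{n..j}. g0 m) \<le> D"
  proof -
    have "(\<Sum>m\<in>{n..j}. g0 m) \<le> (\<Sum>m\<in>{2..j}. g0 m)"
      using Suc by (intro sum_mono2) auto
    then show ?thesis using assms by linarith
  qed
  have capH: "\<forall>p\<in>P. st (H g0 j n) p \<le> D"
    by (rule cap) (use assms sle in \<open>auto simp: H_def\<close>)
  have a1: "adj (q n) (q (Suc n))" using path Suc assms by auto
  have a2: "adj (q (Suc n)) (q n)" using a1 adj_sym by blast
  have a3: "adj (q (n-1)) (q n)"
  proof -
    have "n - 1 \<in> {1..<l}" "Suc (n-1) = n" using Suc assms by auto
    then show ?thesis using path by metis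
  qed
  have a4: "adj (q n) (q (n-1))" using a3 adj_sym by blast
  have inp: "q n \<in> P" using inP Suc assms by auto
  have "exec P D (q (Suc n), st (H g0 j (Suc n))) (map (\<lambda>k. (q k, q (k-1))) (rev [2..<Suc n]) @ rest)
      = exec P D (q n, st (H g0 j n)) (map (\<lambda>k. (q k, q (k-1))) (rev [2..<n]) @ rest)"
    unfolding l using a2 a4 inp capH mv by simp
  also have "\<dots> = exec P D (q 2, st (H g0 j 2)) rest"
    using Suc by (intro Suc.IH) auto
  finally show ?case .
qed

definition batch :: "nat \<Rightarrow> (pixel \<times> pixel) list" where
  "batch j = map (\<lambda>k. (q k, q (k-1))) [2..<Suc j] @ map (\<lambda>k. (q k, q (k-1))) (rev [2..<j]) @ [(q 1, ob)]"

lemma batch_len: "2 \<le> j \<Longrightarrow> length (batch j) = 2 * (j - 1)"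
  by (simp add: batch_def)

lemma batch_set: "2 \<le> j \<Longrightarrow> j \<le> l \<Longrightarrow>
   \<forall>(u, t) \<in> set (batch j). u \<in> q ` {1..l} \<and> (t \<in> q ` {1..l} \<or> t \<notin> P)"
proof -
  assume j: "2 \<le> j" "j \<le> l"
  have "\<And>k. k \<in> {2..j} \<Longrightarrow> q k \<in> q ` {1..l} \<and> q (k-1) \<in> q ` {1..l}"
  proof -
    fix k assume "k \<in> {2..j}"
    then have "k \<in> {1..l}" "k - 1 \<in> {1..l}" using j by auto
    then show "q k \<in> q ` {1..l} \<and> q (k-1) \<in> q ` {1..l}" by blast
  qed
  moreover have "q 1 \<in> q ` {1..l}" using l1 by auto
  ultimately show ?thesis using obP j unfolding batch_def
    by (auto simp del: One_nat_def)
qed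

lemma batch_exec:
  assumes "g0 1 = 0" "\<forall>k. g0 k \<le> D" "(\<Sum>m\<in>{2..j}. g0 m) \<le> D" "2 \<le> j" "j \<le> l"
  shows "exec P D (q 1, st g0) (batch j) = Some (q 1, st (\<lambda>k. if k \<le> j then 0 else g0 k))"
proof -
  have e1: "st g0 = st (G g0 1)" using assms by (intro st_cong) (auto simp: G_def)
  have e2: "G g0 j = H g0 j j" using assms by (intro ext) (auto simp: G_def H_def)
  have "exec P D (q 1, st g0) (batch j)
     = exec P D (q j, st (G g0 j)) (map (\<lambda>k. (q k, q (k-1))) (rev [2..<j]) @ [(q 1, ob)])"
  proof -
    have u: "[Suc 1..<Suc j] = [2..<Suc j]" by (simp only: numeral_2_eq_2 One_nat_def)
    show ?thesis unfolding batch_def e1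
      using out_phase[of g0 1 j "map (\<lambda>k. (q k, q (k-1))) (rev [2..<j]) @ [(q 1, ob)]", unfolded u] assms
      by simp
  qed
  also have "\<dots> = exec P D (q 2, st (H g0 j 2)) [(q 1, ob)]"
    unfolding e2 using back_phase[of g0 j j] assms by simp
  also have "\<dots> = Some (q 1, st ((H g0 j 2)(1 := 0)))"
  proof -
    have capH: "\<forall>p\<in>P. st ((H g0 j 2)(1 := 0)) p \<le> D"
      by (rule cap) (use assms in \<open>auto simp: H_def\<close>)
    have a1: "adj (q 1) (q 2)"
    proof -
      have "(1::nat) \<in> {1..<l}" "Suc 1 = 2" using assms by auto
      then show ?thesis using path by metis
    qed
    have a2: "adj (q 2) (q 1)" using a1 adj_sym by blast
    have inp: "q 1 \<in> P" using inP l1 by auto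
    show ?thesis using a2 adjo inp capH move_out by simp
  qed
  also have "st ((H g0 j 2)(1 := 0)) = st (\<lambda>k. if k \<le> j then 0 else g0 k)"
    using assms by (intro st_cong) (auto simp: H_def)
  finally show ?thesis .
qed

definition gJ :: "nat \<Rightarrow> nat \<Rightarrow> nat" where
  "gJ J = (\<lambda>k. if J < k then 1 else 0)"

lemma sum_gJ:
  assumes "1 \<le> J" "J < j"
  shows "(\<Sum>m\<in>{2..j}. gJ J m) = j - J"
proof -
  have u: "{2..j} = {2..J} \<union> {J<..j}" using assms by auto
  have "(\<Sum>m\<in>{2..j}. gJ J m) = (\<Sum>m\<in>{2..J}. gJ J m) + (\<Sum>m\<in>{J<..j}. gJ J m)"
    unfolding u by (rule sum.union_disjoint) auto
  also have "(\<Sum>m\<in>{2..J}. gJ J m) = 0" by (auto simp: gJ_def)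
  also have "(\<Sum>m\<in>{J<..j}. gJ J m) = (\<Sum>m\<in>{J<..j}. 1)"
    by (rule sum.cong) (auto simp: gJ_def)
  finally show ?thesis by simp
qed

lemma main:
  assumes D2: "D \<ge> 2"
  shows "1 \<le> J \<Longrightarrow> J \<le> l \<Longrightarrow> \<exists>ms. exec P D (q 1, st (gJ J)) ms = Some (q 1, st (gJ l)) \<and>
     (\<forall>(u, t) \<in> set ms. u \<in> q ` {1..l} \<and> (t \<in> q ` {1..l} \<or> t \<notin> P)) \<and>
     real (length ms) \<le> 2 * (real l - 1) + (if D \<ge> 4 then 4 else 2 :: real) * ((\<Sum>i\<in>{J<..l}. real i) / real D) \<and>
     ((l - J) mod D = 0 \<longrightarrow> real (length ms) \<le> (if D \<ge> 4 then 4 else 2 :: real) * ((\<Sum>i\<in>{J<..l}. real i) / real D))"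
proof (induction "l - J" arbitrary: J rule: less_induct)
  case less
  define c where "c = (if D \<ge> 4 then 4 else 2 :: real)"
  have c0: "c \<ge> 0" by (simp add: c_def)
  have D0: "real D > 0" using D2 by simp
  have sum0: "(\<Sum>i\<in>{J<..l}. real i) \<ge> 0" by (rule sum_nonneg) auto
  have cd0: "c * ((\<Sum>i\<in>{J<..l}. real i) / real D) \<ge> 0" using c0 D0 sum0 by simp
  have goal: "\<exists>ms. exec P D (q 1, st (gJ J)) ms = Some (q 1, st (gJ l)) \<and>
     (\<forall>(u, t) \<in> set ms. u \<in> q ` {1..l} \<and> (t \<in> q ` {1..l} \<or> t \<notin> P)) \<and>
     real (length ms) \<le> 2 * (real l - 1) + c * ((\<Sum>i\<in>{J<..l}. real i) / real D) \<and>
     ((l - J) mod D = 0 \<longrightarrow> real (length ms) \<le> c * ((\<Sum>i\<in>{J<..l}. real i) / real D))"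
  proof (cases "J = l")
    case True
    show ?thesis
    proof (intro exI[of _ "[]"] conjI impI)
      show "exec P D (q 1, st (gJ J)) [] = Some (q 1, st (gJ l))" using True by simp
      show "\<forall>(u, t) \<in> set []. u \<in> q ` {1..l} \<and> (t \<in> q ` {1..l} \<or> t \<notin> P)" by simp
      have e: "{J<..l} = {}" using True by simp
      show "real (length ([] :: (pixel \<times> pixel) list)) \<le> 2 * (real l - 1) + c * ((\<Sum>i\<in>{J<..l}. real i) / real D)"
        using e l1 by simp
      show "real (length ([] :: (pixel \<times> pixel) list)) \<le> c * ((\<Sum>i\<in>{J<..l}. real i) / real D)"
        using e by simp
    qed
  next
    case False
    then have Jl: "J < l" using less.prems by simp
    have g1: "gJ J 1 = 0" using less.prems by (simp add: gJ_def)
    have gD: "\<forall>k. gJ J k \<le> D" using D2 by (simp add: gJ_def)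
    show ?thesis
    proof (cases "l - J < D")
      case True
      have sl: "(\<Sum>m\<in>{2..l}. gJ J m) \<le> D" using sum_gJ[of J l] less.prems Jl True by simp
      have ex: "exec P D (q 1, st (gJ J)) (batch l) = Some (q 1, st (gJ l))"
      proof -
        have "st (\<lambda>k. if k \<le> l then 0 else gJ J k) = st (gJ l)"
          by (rule st_cong) (auto simp: gJ_def)
        then show ?thesis using batch_exec[of "gJ J" l] g1 gD sl less.prems Jl by simp
      qed
      have len: "real (length (batch l)) = 2 * (real l - 1)"
        using batch_len[of l] less.prems Jl by (simp add: of_nat_diff)
      have md: "(l - J) mod D \<noteq> 0" using True Jl by simp
      show ?thesis
      proof (intro exI[of _ "batch l"] conjI impI)
        show "exec P D (q 1, st (gJ J)) (batch l) = Some (q 1, st (gJ l))" by (rule ex)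
        show "\<forall>(u, t) \<in> set (batch l). u \<in> q ` {1..l} \<and> (t \<in> q ` {1..l} \<or> t \<notin> P)"
          using batch_set[of l] less.prems Jl by linarith
        show "real (length (batch l)) \<le> 2 * (real l - 1) + c * ((\<Sum>i\<in>{J<..l}. real i) / real D)"
          using len cd0 by linarith
        show "real (length (batch l)) \<le> c * ((\<Sum>i\<in>{J<..l}. real i) / real D)"
          if "(l - J) mod D = 0" using that md by blast
      qed
    next
      case False
      define j where "j = J + D"
      have jl: "j \<le> l" using False j_def Jl by linarith
      have sl: "(\<Sum>m\<in>{2..j}. gJ J m) \<le> D" using sum_gJ[of J j] less.prems D2 j_def by simp
      have ex1: "exec P D (q 1, st (gJ J)) (batch j) = Some (q 1, st (gJ j))"
      proof -
        have "st (\<lambda>k. if k \<le> j then 0 else gJ J k) = st (gJ j)"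
          by (rule st_cong) (auto simp: gJ_def j_def)
        then show ?thesis using batch_exec[of "gJ J" j] g1 gD sl less.prems jl D2 j_def by simp
      qed
      have len: "real (length (batch j)) = 2 * (real j - 1)"
        using batch_len[of j] less.prems D2 j_def by (simp add: of_nat_diff)
      have "l - j < l - J" using D2 j_def jl by simp
      from less.hyps[OF this] obtain ms' where
        ms': "exec P D (q 1, st (gJ j)) ms' = Some (q 1, st (gJ l))"
        "\<forall>(u, t) \<in> set ms'. u \<in> q ` {1..l} \<and> (t \<in> q ` {1..l} \<or> t \<notin> P)"
        "real (length ms') \<le> 2 * (real l - 1) + c * ((\<Sum>i\<in>{j<..l}. real i) / real D)"
        "(l - j) mod D = 0 \<longrightarrow> real (length ms') \<le> c * ((\<Sum>i\<in>{j<..l}. real i) / real D)"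
        using less.prems jl j_def unfolding c_def by auto
      define A where "A = (\<Sum>i\<in>{J<..j}. real i)"
      define B where "B = (\<Sum>i\<in>{j<..l}. real i)"
      have AB: "(\<Sum>i\<in>{J<..l}. real i) = A + B"
      proof -
        have u: "{J<..l} = {J<..j} \<union> {j<..l}" using jl j_def by auto
        show ?thesis unfolding A_def B_def u by (rule sum.union_disjoint) auto
      qed
      have gA: "2 * A = real D * (2 * real J + real D + 1)"
        unfolding A_def j_def by (rule gauss_blk)
      have AD: "A / real D = (2 * real J + real D + 1) / 2"
        using gA D0 by (simp add: field_simps)
      have key: "2 * (real j - 1) \<le> c * (A / real D)"
      proof (cases "D \<ge> 4")
        case True
        then show ?thesis unfolding AD c_def j_def by simp
      next
        case False
        then have "D \<le> 3" by simp
        then show ?thesis unfolding AD c_def j_def using False by simp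
      qed
      have dsplit: "c * ((A + B) / real D) = c * (A / real D) + c * (B / real D)"
        by (simp add: add_divide_distrib distrib_left)
      have md: "(l - J) mod D = (l - j) mod D"
      proof -
        have "l - J = (l - j) + D" using jl j_def by simp
        then show ?thesis by simp
      qed
      have ex: "exec P D (q 1, st (gJ J)) (batch j @ ms') = Some (q 1, st (gJ l))"
        using ex1 ms'(1) by (simp add: exec_append)
      have st: "\<forall>(u, t) \<in> set (batch j @ ms'). u \<in> q ` {1..l} \<and> (t \<in> q ` {1..l} \<or> t \<notin> P)"
        using batch_set[of j] ms'(2) less.prems D2 j_def jl by auto
      have L: "real (length (batch j @ ms')) = 2 * (real j - 1) + real (length ms')"
        using len by simp
      show ?thesis
      proof (intro exI[of _ "batch j @ ms'"] conjI impI)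
        show "exec P D (q 1, st (gJ J)) (batch j @ ms') = Some (q 1, st (gJ l))" by (rule ex)
        show "\<forall>(u, t) \<in> set (batch j @ ms'). u \<in> q ` {1..l} \<and> (t \<in> q ` {1..l} \<or> t \<notin> P)"
          by (rule st)
        have e: "c * ((\<Sum>i\<in>{J<..l}. real i) / real D) = c * (A / real D) + c * (B / real D)"
          unfolding AB by (rule dsplit)
        show "real (length (batch j @ ms')) \<le> 2 * (real l - 1) + c * ((\<Sum>i\<in>{J<..l}. real i) / real D)"
          using L e key ms'(3) unfolding B_def by linarith
        show "real (length (batch j @ ms')) \<le> c * ((\<Sum>i\<in>{J<..l}. real i) / real D)"
          if "(l - J) mod D = 0"
        proof -
          have "real (length ms') \<le> c * (B / real D)" using ms'(4) that md unfolding B_def by simp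
          then show ?thesis using L e key by linarith
        qed
      qed
    qed
  qed
  then show ?case unfolding c_def .
qed

end



theorem lemma3:
  fixes P :: "pixel set" and D :: nat and q :: "nat \<Rightarrow> pixel"
    and l J :: nat and s0 :: snow
  assumes dom: "domain P"
    and D2: "D \<ge> 2"
    and l1: "l \<ge> 1"
    and inP: "\<forall>i\<in>{1..l}. q i \<in> P"
    and dist: "inj_on q {1..l}"
    and path: "\<forall>i\<in>{1..<l}. adj (q i) (q (Suc i))"
    and shape: "\<exists>m\<in>{1..l}.
        (\<forall>i\<in>{1..<m}. step q i = step q 1) \<and>
        (\<forall>i\<in>{m..<l}. step q i = step q m) \<and>
        (m < l \<and> 1 < m \<longrightarrow>
           fst (step q m) * fst (step q 1) + snd (step q m) * snd (step q 1) = 0)"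
    and bd: "boundary_pixel P (q 1)"
    and vd: "\<forall>i\<in>{1..l}. vdist P (q i) = i"
    and J: "1 \<le> J" "J \<le> l"
    and empty: "\<forall>i\<in>{1..J}. s0 (q i) = 0"
    and ones: "\<forall>i\<in>{J<..l}. s0 (q i) = 1"
    and cap0: "\<forall>p\<in>P. s0 p \<le> D"
  shows "\<exists>ms s'.
           exec P D (q 1, s0) ms = Some (q 1, s') \<and>
           (\<forall>(u, t) \<in> set ms. u \<in> q ` {1..l} \<and> (t \<in> q ` {1..l} \<or> t \<notin> P)) \<and>
           (\<forall>i\<in>{1..l}. s' (q i) = 0) \<and>
           (let Delta = (\<Sum>i\<in>{J<..l}. real i) / real D;
                c = (if D \<ge> 4 then 4 else 2 :: real)
            in real (length ms) \<le> 2 * (real l - 1) + c * Delta \<and>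
               ((l - J) mod D = 0 \<longrightarrow> real (length ms) \<le> c * Delta))"
proof -
  obtain ob where ob: "adj (q 1) ob" "ob \<notin> P" using bd unfolding boundary_pixel_def by blast
  interpret pctx P D q l s0 ob
    by (unfold_locales) (use inP dist path ob cap0 l1 in auto)
  have s0e: "s0 = st (gJ J)"
  proof -
    have "st (gJ J) = st (\<lambda>k. s0 (q k))"
      by (rule st_cong) (use empty ones in \<open>auto simp: gJ_def\<close>)
    then show ?thesis using st_s0 by metis
  qed
  obtain ms where msall: "exec P D (q 1, st (gJ J)) ms = Some (q 1, st (gJ l)) \<and>
     (\<forall>(u, t) \<in> set ms. u \<in> q ` {1..l} \<and> (t \<in> q ` {1..l} \<or> t \<notin> P)) \<and>
     real (length ms) \<le> 2 * (real l - 1) + (if D \<ge> 4 then 4 else 2 :: real) * ((\<Sum>i\<in>{J<..l}. real i) / real D) \<and>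
     ((l - J) mod D = 0 \<longrightarrow> real (length ms) \<le> (if D \<ge> 4 then 4 else 2 :: real) * ((\<Sum>i\<in>{J<..l}. real i) / real D))"
    using main[OF D2 J] by (rule exE)
  note m1 = msall[THEN conjunct1]
  note m2 = msall[THEN conjunct2, THEN conjunct1]
  note m3 = msall[THEN conjunct2, THEN conjunct2, THEN conjunct1]
  note m4 = msall[THEN conjunct2, THEN conjunct2, THEN conjunct2]
  have z: "\<forall>i\<in>{1..l}. st (gJ l) (q i) = 0"
  proof
    fix i assume "i \<in> {1..l}"
    then show "st (gJ l) (q i) = 0" by (simp only: st_q) (simp add: gJ_def)
  qed
  have ex: "exec P D (q 1, s0) ms = Some (q 1, st (gJ l))"
    using m1 unfolding s0e[symmetric] .
  show ?thesis
    unfolding Let_def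
  proof (intro exI[of _ ms] exI[of _ "st (gJ l)"] conjI)
    show "exec P D (q 1, s0) ms = Some (q 1, st (gJ l))" by (rule ex)
  qed (rule m2, rule z, rule m3, rule m4)
qed

end
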